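(* Let $\rho:\mathfrak k\to\operatorname{End}(L^s)$ be a generalized spin representation of the maximal compact subalgebra $\mathfrak k$ of a simply laced Kac--Moody algebra over a field $F$ of characteristic $0$ with diagram $D=(V,E)$, and put $A_i:=2I\cdot\rho(X_i)$. Let $W=\langle s_1,\dots,s_n\mid (s_is_j)^{m_{ij}}=1\rangle$ with $m_{ii}=1$, $m_{ij}=2$ if $i\ne j$ and $\{v_i,v_j\}\notin E$, and $m_{ij}=4$ if $\{v_i,v_j\}\in E$. Then $s_i\mapsto A_i$ extends to a group homomorphism $W\to\mathrm{GL}_s(L)$.
   Context: $L=F(I)$ with $I^2=-1$. $X_1,\dots,X_n$ are the Berman generators of $\mathfrak k$: $\mathfrak k$ is the Lie algebra generated by $X_i=e_i-f_i$ with defining relations $[X_i,[X_i,X_j]]=-X_j$ for adjacent $v_i,v_j$ and $[X_i,X_j]=0$ for non-adjacent $i\neq j$. A generalized spin representation is a Lie algebra homomorphism $\rho:\mathfrak k\to\operatorname{End}(L^s)$ with $\rho(X_i)^2=-\tfrac14\mathrm{id}_s$ for all $i$. *)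

theory Defs
  imports "Jordan_Normal_Form.Matrix"
begin

text \<open>Diagram D = (V,E) with V = {0..<n} (vertex v_i is the index i) and E a set of
  unordered pairs {i,j} of distinct vertices (simple graph; simply laced diagram).\<close>
definition simple_diagram :: "nat \<Rightarrow> nat set set \<Rightarrow> bool" where
  "simple_diagram n E \<longleftrightarrow> (\<forall>e\<in>E. \<exists>i j. i < n \<and> j < n \<and> i \<noteq> j \<and> e = {i, j})"

definition lie_br :: "'a::comm_ring_1 mat \<Rightarrow> 'a mat \<Rightarrow> 'a mat" where
  "lie_br A B = A * B - B * A"

text \<open>Since the maximal compact subalgebra k is presented by the Berman generators X_i and
  relations, a Lie algebra homomorphism rho : k \<rightarrow> End(L^s) is the same as a choice of the
  images R i = rho(X_i) satisfying the defining relations.\<close>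
definition gen_spin_rep :: "nat \<Rightarrow> nat set set \<Rightarrow> nat \<Rightarrow> (nat \<Rightarrow> 'a::field mat) \<Rightarrow> bool" where
  "gen_spin_rep n E s R \<longleftrightarrow>
     (\<forall>i<n. R i \<in> carrier_mat s s) \<and>
     (\<forall>i<n. \<forall>j<n. {i, j} \<in> E \<longrightarrow> lie_br (R i) (lie_br (R i) (R j)) = - R j) \<and>
     (\<forall>i<n. \<forall>j<n. i \<noteq> j \<and> {i, j} \<notin> E \<longrightarrow> lie_br (R i) (R j) = 0\<^sub>m s s) \<and>
     (\<forall>i<n. R i * R i = (- (1 / 4)) \<cdot>\<^sub>m 1\<^sub>m s)"

definition cox_m :: "nat set set \<Rightarrow> nat \<Rightarrow> nat \<Rightarrow> nat" where
  "cox_m E i j = (if i = j then 1 else if {i, j} \<in> E then 4 else 2)"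

text \<open>s_i \<mapsto> A i extends to a group homomorphism W \<rightarrow> GL_s(L), where
  W = < s_1..s_n | (s_i s_j)^(m_ij) = 1 >: by the universal property of the presentation,
  this holds iff every A i is an invertible s x s matrix and the A i satisfy the relations.\<close>
definition extends_to_W_hom :: "nat \<Rightarrow> nat set set \<Rightarrow> nat \<Rightarrow> (nat \<Rightarrow> 'a::field mat) \<Rightarrow> bool" where
  "extends_to_W_hom n E s A \<longleftrightarrow>
     (\<forall>i<n. A i \<in> carrier_mat s s \<and> invertible_mat (A i)) \<and>
     (\<forall>i<n. \<forall>j<n. (A i * A j) ^\<^sub>m (cox_m E i j) = 1\<^sub>m s)"

end

theory Submission
  imports Defs
begin

lemma smult_smult_times: "a \<cdot>\<^sub>m (b \<cdot>\<^sub>m A) = (a * b :: 'a::comm_ring) \<cdot>\<^sub>m A"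
  by (rule eq_matI) (auto simp: mult.assoc)

lemma one_smult_mat1[simp]: "(1::'a::semiring_1) \<cdot>\<^sub>m A = A"
  by (rule eq_matI) auto

lemma sm:
  fixes X Y :: "'a::field mat"
  assumes "X \<in> carrier_mat n n" "Y \<in> carrier_mat n n"
  shows "(a \<cdot>\<^sub>m X) * (b \<cdot>\<^sub>m Y) = (a * b) \<cdot>\<^sub>m (X * Y)"
proof -
  have "(a \<cdot>\<^sub>m X) * (b \<cdot>\<^sub>m Y) = a \<cdot>\<^sub>m (X * (b \<cdot>\<^sub>m Y))"
    by (rule mult_smult_assoc_mat[of X n n]) (use assms in auto)
  also have "X * (b \<cdot>\<^sub>m Y) = b \<cdot>\<^sub>m (X * Y)" by (rule mult_smult_distrib[OF assms])
  finally show ?thesis by (simp add: smult_smult_times)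
qed

lemma adj_rel:
  fixes X Y :: "'a::field_char_0 mat"
  assumes X: "X \<in> carrier_mat s s" and Y: "Y \<in> carrier_mat s s"
    and XX: "X * X = (- (1/4)) \<cdot>\<^sub>m 1\<^sub>m s"
    and L: "lie_br X (lie_br X Y) = - Y"
  shows "X * Y * X = (1/4) \<cdot>\<^sub>m Y"
proof -
  define c :: 'a where "c = - (1/4)"
  have XY: "X * Y \<in> carrier_mat s s" "Y * X \<in> carrier_mat s s" "X*Y*X \<in> carrier_mat s s"
    using X Y by auto
  have e1: "X * (X * Y - Y * X) = c \<cdot>\<^sub>m Y - X * Y * X"
  proof -
    have "X * (X * Y - Y * X) = X * (X * Y) - X * (Y * X)"
      by (rule mult_minus_distrib_mat[OF X XY(1) XY(2)])
    also have "X * (X * Y) = (X * X) * Y" using X Y by (simp add: assoc_mult_mat)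
    also have "\<dots> = c \<cdot>\<^sub>m Y" using XX Y c_def
      by (simp add: mult_smult_assoc_mat[OF one_carrier_mat Y])
    also have "X * (Y * X) = X * Y * X" using X Y by (simp add: assoc_mult_mat)
    finally show ?thesis .
  qed
  have e2: "(X * Y - Y * X) * X = X * Y * X - c \<cdot>\<^sub>m Y"
  proof -
    have "(X * Y - Y * X) * X = X * Y * X - Y * X * X"
      by (rule minus_mult_distrib_mat[OF XY(1) _ X]) (use X Y in auto)
    also have "Y * X * X = Y * (X * X)" using X Y by (simp add: assoc_mult_mat)
    also have "\<dots> = c \<cdot>\<^sub>m Y" using XX Y c_def
      by (simp add: mult_smult_distrib[OF Y one_carrier_mat])
    finally show ?thesis .
  qed
  have L2: "(c \<cdot>\<^sub>m Y - X * Y * X) - (X * Y * X - c \<cdot>\<^sub>m Y) = - Y"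
    using L e1 e2 unfolding lie_br_def by simp
  show ?thesis
  proof (rule eq_matI)
    fix i j assume ij: "i < dim_row ((1/4) \<cdot>\<^sub>m Y)" "j < dim_col ((1/4) \<cdot>\<^sub>m Y)"
    then have ij': "i < s" "j < s" using Y by auto
    have "((c \<cdot>\<^sub>m Y - X * Y * X) - (X * Y * X - c \<cdot>\<^sub>m Y)) $$ (i,j) = (- Y) $$ (i,j)"
      using L2 by simp
    then have "(c * Y $$ (i,j) - (X*Y*X) $$ (i,j)) - ((X*Y*X) $$ (i,j) - c * Y $$ (i,j)) = - Y $$ (i,j)"
      using ij' X Y XY by simp
    then show "(X * Y * X) $$ (i, j) = ((1/4) \<cdot>\<^sub>m Y) $$ (i, j)"
      using ij' Y unfolding c_def by (simp add: field_simps)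
  qed (use X Y in auto)
qed

lemma comm_rel:
  fixes X Y :: "'a::field mat"
  assumes X: "X \<in> carrier_mat s s" and Y: "Y \<in> carrier_mat s s"
    and L: "lie_br X Y = 0\<^sub>m s s"
  shows "X * Y = Y * X"
proof (rule eq_matI)
  fix i j assume "i < dim_row (Y * X)" "j < dim_col (Y * X)"
  then have ij: "i < s" "j < s" using X Y by auto
  have "(X * Y - Y * X) $$ (i,j) = (0\<^sub>m s s) $$ (i,j)" using L unfolding lie_br_def by simp
  then show "(X * Y) $$ (i,j) = (Y * X) $$ (i,j)" using ij X Y by simp
qed (use X Y in auto)

theorem mainTheorem6:
  fixes n s :: nat and E :: "nat set set"
    and I :: "'a::field_char_0" and R :: "nat \<Rightarrow> 'a mat"
  assumes "simple_diagram n E"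
    and "I * I = -1"
    and "gen_spin_rep n E s R"
  shows "extends_to_W_hom n E s (\<lambda>i. (2 * I) \<cdot>\<^sub>m R i)"
proof -
  note G = assms(3)[unfolded gen_spin_rep_def]
  have C: "\<And>i. i < n \<Longrightarrow> R i \<in> carrier_mat s s" using G by blast
  have sq: "\<And>i. i < n \<Longrightarrow> R i * R i = (- (1 / 4)) \<cdot>\<^sub>m 1\<^sub>m s" using G by blast
  have II: "I * I = -1" by fact
  have Asq: "((2 * I) \<cdot>\<^sub>m R i) * ((2 * I) \<cdot>\<^sub>m R i) = 1\<^sub>m s" if "i < n" for i
  proof -
    have "((2 * I) \<cdot>\<^sub>m R i) * ((2 * I) \<cdot>\<^sub>m R i) = ((2*I)*(2*I)) \<cdot>\<^sub>m (R i * R i)"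
      by (rule sm[OF C[OF that] C[OF that]])
    also have "\<dots> = 1\<^sub>m s" using sq[OF that] II
      by (simp add: smult_smult_times algebra_simps)
    finally show ?thesis .
  qed
  show ?thesis unfolding extends_to_W_hom_def
  proof (intro conjI allI impI)
    fix i assume i: "i < n"
    show "(2 * I) \<cdot>\<^sub>m R i \<in> carrier_mat s s" using C[OF i] by simp
    show "invertible_mat ((2 * I) \<cdot>\<^sub>m R i)"
      unfolding invertible_mat_def inverts_mat_def using Asq[OF i] C[OF i]
      by (auto simp: square_mat.simps)
  next
    fix i j assume i: "i < n" and j: "j < n"
    define X where "X = R i"
    define Y where "Y = R j"
    have X: "X \<in> carrier_mat s s" and Y: "Y \<in> carrier_mat s s" using C i j X_def Y_def by auto
    have XX: "X * X = (- (1 / 4)) \<cdot>\<^sub>m 1\<^sub>m s" and YY: "Y * Y = (- (1 / 4)) \<cdot>\<^sub>m 1\<^sub>m s"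
      using sq i j X_def Y_def by auto
    have AB: "((2 * I) \<cdot>\<^sub>m X) * ((2 * I) \<cdot>\<^sub>m Y) = (- 4) \<cdot>\<^sub>m (X * Y)"
    proof -
      have "(2*I)*(2*I) = (-4::'a)" using II by (simp add: algebra_simps)
      then show ?thesis using sm[OF X Y, of "2*I" "2*I"] by simp
    qed
    have XYc: "X * Y \<in> carrier_mat s s" using X Y by auto
    show "((2 * I) \<cdot>\<^sub>m R i * ((2 * I) \<cdot>\<^sub>m R j)) ^\<^sub>m cox_m E i j = 1\<^sub>m s"
    proof (cases "i = j")
      case True
      then show ?thesis using Asq[OF i] C[OF i] by (simp add: cox_m_def)
    next
      case False
      show ?thesis
      proof (cases "{i,j} \<in> E")
        case True
        have "lie_br X (lie_br X Y) = - Y" using G i j True X_def Y_def by blast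
        then have Z: "X * Y * X = (1/4) \<cdot>\<^sub>m Y" using adj_rel[OF X Y XX] by blast
        have P2: "(X * Y) * (X * Y) = (- (1/16)) \<cdot>\<^sub>m 1\<^sub>m s"
        proof -
          have "(X * Y) * (X * Y) = (X * Y * X) * Y"
            using assoc_mult_mat[of "X*Y" s s X s Y s] X Y by simp
          also have "\<dots> = (1/4) \<cdot>\<^sub>m (Y * Y)" using Z Y by (simp add: mult_smult_assoc_mat)
          also have "\<dots> = (- (1/16)) \<cdot>\<^sub>m 1\<^sub>m s" using YY by (simp add: smult_smult_times)
          finally show ?thesis .
        qed
        define M where "M = (- 4) \<cdot>\<^sub>m (X * Y)"
        have Mc: "M \<in> carrier_mat s s" using XYc M_def by simp
        have M2: "M * M = (- 1) \<cdot>\<^sub>m 1\<^sub>m s"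
          unfolding M_def using sm[OF XYc XYc, of "-4" "-4"] P2 by (simp add: smult_smult_times)
        have "M ^\<^sub>m 4 = ((M * M) * M) * M" by (simp add: eval_nat_numeral)
        also have "\<dots> = (M * M) * (M * M)" by (rule assoc_mult_mat[OF mult_carrier_mat[OF Mc Mc] Mc Mc])
        also have "\<dots> = 1\<^sub>m s" unfolding M2
          using sm[OF one_carrier_mat[of s] one_carrier_mat[of s], of "-1::'a" "-1"] by simp
        finally show ?thesis using AB False True unfolding M_def X_def Y_def cox_m_def by simp
      next
        case nE: False
        have "lie_br X Y = 0\<^sub>m s s" using G i j nE False X_def Y_def by blast
        then have com: "X * Y = Y * X" using comm_rel[OF X Y] by blast
        have P2: "(X * Y) * (X * Y) = (1/16) \<cdot>\<^sub>m 1\<^sub>m s"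
        proof -
          have "(X * Y) * (X * Y) = X * (Y * (X * Y))" by (rule assoc_mult_mat[OF X Y XYc])
          also have "Y * (X * Y) = (Y * X) * Y" by (rule assoc_mult_mat[OF Y X Y, symmetric])
          also have "\<dots> = (X * Y) * Y" using com by simp
          also have "\<dots> = X * (Y * Y)" by (rule assoc_mult_mat[OF X Y Y])
          also have "X * (X * (Y * Y)) = (X * X) * (Y * Y)"
            by (rule assoc_mult_mat[OF X X mult_carrier_mat[OF Y Y], symmetric])
          also have "\<dots> = (1/16) \<cdot>\<^sub>m 1\<^sub>m s" unfolding XX YY
            using sm[OF one_carrier_mat[of s] one_carrier_mat[of s], of "- (1/4)::'a" "- (1/4)"] by simp
          finally show ?thesis .
        qed
        have "((- 4) \<cdot>\<^sub>m (X * Y)) ^\<^sub>m 2 = ((- 4) \<cdot>\<^sub>m (X * Y)) * ((- 4) \<cdot>\<^sub>m (X * Y))"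
          by (simp add: eval_nat_numeral)
        also have "\<dots> = 1\<^sub>m s" using sm[OF XYc XYc, of "-4" "-4"] P2 by (simp add: smult_smult_times)
        finally show ?thesis using AB False nE unfolding X_def Y_def cox_m_def by simp
      qed
    qed
  qed
qed

end
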